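(* Let $\alpha, \beta$ be voltage assignments. Every isomorphism of $\mathbf{Z}/\ell$-covering graphs $f \colon X^\alpha \to X^\beta$ is of the form $f(x,i) = (t x^\sigma + a, i + k)$ for some $t \in \mathbf{F}_q^{\boxtimes}$, $\sigma \in \mathrm{Gal}(\mathbf{F}_q/\mathbf{F}_p)$, $a \in \mathbf{F}_q$, $k \in \mathbf{Z}/\ell$ satisfying $\alpha(s) = \beta(t s^\sigma)$ for all $s \in \mathbf{F}_q^{\boxtimes}$. Conversely, for any such $t, \sigma, a, k$ with $\alpha(s) = \beta(ts^\sigma)$ for all $s \in \mathbf{F}_q^{\boxtimes}$, the map $(x,i) \mapsto (tx^\sigma + a, i+k)$ is an isomorphism of $\mathbf{Z}/\ell$-covering graphs $X^\alpha \to X^\beta$.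
   Context: Let $\mathbf{F}_q$ be a finite field of characteristic $p$, $q = p^r \equiv 1 \pmod 4$, $\mathbf{F}_q^{\boxtimes}$ the set of nonzero squares, and $\ell \neq p$ a prime. A voltage assignment is a function $\alpha \colon \mathbf{F}_q^{\boxtimes} \to \mathbf{Z}/\ell$, not identically zero, with $\alpha(-s) = -\alpha(s)$. The graph $X^\alpha$ has vertex set $\mathbf{F}_q \times \mathbf{Z}/\ell$, with $(x,i)$ adjacent to $(y,j)$ iff $y - x \in \mathbf{F}_q^{\boxtimes}$ and $j - i = \alpha(y-x)$; it covers the Paley graph $X(\mathbf{F}_q)$ (vertex set $\mathbf{F}_q$, $x \sim y$ iff $y - x \in \mathbf{F}_q^{\boxtimes}$) via $(x,i) \mapsto x$, and $\mathbf{Z}/\ell$ acts by $j\cdot(x,i) = (x,i+j)$. An isomorphism of $\mathbf{Z}/\ell$-covering graphs $X^\alpha \to X^\beta$ is a graph isomorphism $f$ satisfying $f(x,i+j) = f(x,i) + (0,j)$ for all $x \in \mathbf{F}_q$, $i,j \in \mathbf{Z}/\ell$. *)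

theory Defs
  imports "Berlekamp_Zassenhaus.Finite_Field"
begin

definition nz_squares :: "'a::field set" where
  "nz_squares = {s. s \<noteq> 0 \<and> (\<exists>y. s = y ^ 2)}"

definition galois_prime :: "('a::field \<Rightarrow> 'a) set" where
  "galois_prime = {\<sigma>. bij \<sigma> \<and> (\<forall>x y. \<sigma> (x + y) = \<sigma> x + \<sigma> y) \<and>
       (\<forall>x y. \<sigma> (x * y) = \<sigma> x * \<sigma> y) \<and> \<sigma> 1 = 1 \<and> (\<forall>n::nat. \<sigma> (of_nat n) = of_nat n)}"

text \<open>Voltage assignment F_q^squares -> Z/l (values off the squares are irrelevant).\<close>
definition voltage_assignment :: "('a::field \<Rightarrow> 'l::prime_card mod_ring) \<Rightarrow> bool" where
  "voltage_assignment \<alpha> \<longleftrightarrow> (\<exists>s\<in>nz_squares. \<alpha> s \<noteq> 0) \<and> (\<forall>s\<in>nz_squares. \<alpha> (- s) = - \<alpha> s)"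

definition volt_adj :: "('a::field \<Rightarrow> 'l::prime_card mod_ring) \<Rightarrow> 'a \<times> 'l mod_ring \<Rightarrow> 'a \<times> 'l mod_ring \<Rightarrow> bool" where
  "volt_adj \<alpha> u v \<longleftrightarrow> fst v - fst u \<in> nz_squares \<and> snd v - snd u = \<alpha> (fst v - fst u)"

definition cover_iso :: "('a::field \<Rightarrow> 'l::prime_card mod_ring) \<Rightarrow> ('a \<Rightarrow> 'l mod_ring)
     \<Rightarrow> ('a \<times> 'l mod_ring \<Rightarrow> 'a \<times> 'l mod_ring) \<Rightarrow> bool" where
  "cover_iso \<alpha> \<beta> f \<longleftrightarrow> bij f \<and> (\<forall>u v. volt_adj \<alpha> u v \<longleftrightarrow> volt_adj \<beta> (f u) (f v)) \<and>
     (\<forall>x i j. f (x, i + j) = (fst (f (x, i)), snd (f (x, i)) + j))"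

end

theory Submission
  imports Defs
begin

lemma ff_power_card: fixes x :: "'a::{field,finite}" shows "x ^ CARD('a) = x"
proof (cases "x = 0")
  case False
  have "x * (\<Prod>y\<in>UNIV-{0}. x * y) = x * x ^ (card (UNIV :: 'a set) - 1) * \<Prod>(UNIV-{0})"
    by (simp add: prod.distrib mult_ac)
  also have "x * x ^ (card (UNIV :: 'a set) - 1) = x ^ Suc (card (UNIV :: 'a set) - 1)"
    by (subst power_Suc) auto
  also have "Suc (card (UNIV :: 'a set) - 1) = card (UNIV :: 'a set)"
    using finite_UNIV_card_ge_0[where ?'a = 'a] by simp
  also have "(\<Prod>y\<in>UNIV-{0}. x * y) = (\<Prod>y\<in>UNIV-{0}. y)"
    by (rule prod.reindex_bij_witness[of _ "\<lambda>y. y / x" "\<lambda>y. x * y"]) (use False in auto)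
  finally show ?thesis
    by simp
qed (use finite_UNIV_card_ge_0[where ?'a = 'a] in auto)

lemma ff_card_ge2: "CARD('a::{field,finite}) \<ge> 2"
proof -
  have "{0::'a, 1} \<subseteq> UNIV" by auto
  hence "card {0::'a,1} \<le> CARD('a)" by (intro card_mono) auto
  thus ?thesis by simp
qed

lemma ff_power_card_minus1: fixes x :: "'a::{field,finite}" assumes "x \<noteq> 0"
  shows "x ^ (CARD('a) - 1) = 1"
proof -
  have "x * x ^ (CARD('a) - 1) = x ^ CARD('a)"
    using ff_card_ge2[where 'a='a] by (simp flip: power_Suc)
  also have "\<dots> = x" by (rule ff_power_card)
  finally show ?thesis using assms by simp
qed

lemma ff_prime_char: "prime CHAR('a::{field,finite})"
  by (intro prime_CHAR_semidom finite_imp_CHAR_pos) auto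

lemma ff_of_nat_CHAR: "(of_nat CHAR('a::{field,finite}) :: 'a) = 0" by simp

lemma of_nat_mult_closed:
  fixes H :: "'a::{field,finite} set"
  assumes "0 \<in> H" "\<And>x y. x \<in> H \<Longrightarrow> y \<in> H \<Longrightarrow> x + y \<in> H" "h \<in> H"
  shows "of_nat k * h \<in> H"
  by (induction k) (use assms in \<open>auto simp: algebra_simps\<close>)

lemma ff_card_prime_power_aux:
  fixes H :: "'a::{field,finite} set"
  assumes "0 \<in> H" "\<And>x y. x \<in> H \<Longrightarrow> y \<in> H \<Longrightarrow> x + y \<in> H" "\<And>x. x \<in> H \<Longrightarrow> -x \<in> H"
    "card H = CHAR('a) ^ k"
  shows "\<exists>n. CARD('a) = CHAR('a) ^ n"
  using assms
proof (induction "CARD('a) - card H" arbitrary: H k rule: less_induct)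
  case less
  define p where "p = CHAR('a)"
  have pp: "prime p" unfolding p_def by (rule ff_prime_char)
  hence p0: "p > 0" by (simp add: prime_gt_0_nat)
  show ?case
  proof (cases "H = UNIV")
    case True thus ?thesis using less.prems by auto
  next
    case False
    then obtain x where x: "x \<notin> H" by auto
    define H' where "H' = (\<lambda>(h,j). h + of_nat j * x) ` (H \<times> {..<p})"
    have ofn_mod: "(of_nat j :: 'a) = of_nat (j mod p)" for j
      unfolding p_def by simp
    have mem: "h + of_nat j * x \<in> H'" if "h \<in> H" for h j
    proof -
      have "h + of_nat j * x = h + of_nat (j mod p) * x" using ofn_mod by simp
      moreover have "(h, j mod p) \<in> H \<times> {..<p}" using that p0 by auto
      ultimately show ?thesis unfolding H'_def by force
    qed
    have H'0: "0 \<in> H'" using mem[OF less.prems(1), of 0] by simp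
    have H'add: "a + b \<in> H'" if ab: "a \<in> H'" "b \<in> H'" for a b
    proof -
      obtain h1 j1 h2 j2 where "h1 \<in> H" "h2 \<in> H" "a = h1 + of_nat j1 * x" "b = h2 + of_nat j2 * x"
        using ab unfolding H'_def by auto
      hence "a + b = (h1 + h2) + of_nat (j1 + j2) * x" by (simp add: algebra_simps)
      thus ?thesis using mem[of "h1 + h2" "j1 + j2"] less.prems(2) \<open>h1 \<in> H\<close> \<open>h2 \<in> H\<close> by simp
    qed
    have H'neg: "- a \<in> H'" if aH: "a \<in> H'" for a
    proof -
      obtain h1 j1 where h1: "h1 \<in> H" "j1 < p" "a = h1 + of_nat j1 * x"
        using aH unfolding H'_def by auto
      have "(of_nat (p - j1) :: 'a) = of_nat p - of_nat j1" using h1(2) by (simp add: of_nat_diff)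
      moreover have "(of_nat p :: 'a) = 0" unfolding p_def by simp
      ultimately have e: "(of_nat (p - j1) :: 'a) = - of_nat j1" by simp
      have "- a = (- h1) + of_nat (p - j1) * x" unfolding e using h1 by (simp add: algebra_simps)
      thus ?thesis using mem[of "- h1" "p - j1"] less.prems(3) h1 by simp
    qed
    have inj: "inj_on (\<lambda>(h,j). h + of_nat j * x) (H \<times> {..<p})"
    proof (rule inj_onI, clarify)
      fix h1 j1 h2 j2 assume a: "h1 \<in> H" "j1 < p" "h2 \<in> H" "j2 < p"
        "h1 + of_nat j1 * x = h2 + of_nat j2 * x"
      have key: False if "j < p" "j > 0" "of_nat j * x \<in> H" for j
      proof -
        have "(of_nat j :: 'a) \<noteq> 0"
          using that pp unfolding p_def by (auto simp: of_nat_eq_0_iff_char_dvd dest: dvd_imp_le)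
        hence "x = of_nat (j ^ (CARD('a) - 2)) * (of_nat j * x)"
        proof -
          assume nz: "(of_nat j :: 'a) \<noteq> 0"
          have "(of_nat j :: 'a) ^ (CARD('a) - 2) * of_nat j = of_nat j ^ (CARD('a) - 1)"
            using ff_card_ge2[where 'a='a]
            by (metis One_nat_def Suc_diff_Suc Suc_le_lessD diff_Suc_1 numeral_2_eq_2 power_Suc2)
          also have "\<dots> = 1" by (rule ff_power_card_minus1[OF nz])
          finally show ?thesis by (simp add: mult.assoc[symmetric])
        qed
        thus False using of_nat_mult_closed[OF less.prems(1,2) that(3)] x by metis
      qed
      show "h1 = h2 \<and> j1 = j2"
      proof (cases j1 j2 rule: linorder_cases)
        case less
        have "of_nat (j2 - j1) * x = h1 - h2" using a less by (simp add: of_nat_diff algebra_simps)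
        moreover have "h1 - h2 \<in> H" using a less.prems(2,3) by (metis diff_conv_add_uminus)
        ultimately have "of_nat (j2 - j1) * x \<in> H" by simp
        moreover have "j2 - j1 < p" "j2 - j1 > 0" using a less by auto
        ultimately show ?thesis using key by blast
      next
        case greater
        have "of_nat (j1 - j2) * x = h2 - h1" using a greater by (simp add: of_nat_diff algebra_simps)
        moreover have "h2 - h1 \<in> H" using a less.prems(2,3) by (metis diff_conv_add_uminus)
        ultimately have "of_nat (j1 - j2) * x \<in> H" by simp
        moreover have "j1 - j2 < p" "j1 - j2 > 0" using a greater by auto
        ultimately show ?thesis using key by blast
      qed (use a in auto)
    qed
    have finH: "finite H" by simp
    have cardH': "card H' = CHAR('a) ^ Suc k"
      unfolding H'_def using card_image[OF inj] less.prems(4) by (simp add: card_cartesian_product p_def)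
    have "H \<subseteq> H'" using mem[of _ 0] by auto
    moreover have "x \<in> H'" using mem[OF less.prems(1), of 1] by simp
    ultimately have "H \<subset> H'" using x by auto
    hence "card H < card H'" by (intro psubset_card_mono) auto
    moreover have "card H' \<le> CARD('a)" by (intro card_mono) auto
    ultimately have "CARD('a) - card H' < CARD('a) - card H" by linarith
    from less.hyps[OF this H'0 H'add H'neg cardH'] show ?thesis .
  qed
qed

lemma ff_card_prime_power: "\<exists>n. CARD('a::{field,finite}) = CHAR('a) ^ n"
  by (rule ff_card_prime_power_aux[of "{0}" 0]) auto


lemma ff_card_pow: obtains n where "CARD('a::{field,finite}) = CHAR('a) ^ n" "n \<ge> 1"
proof -
  obtain n where n: "CARD('a) = CHAR('a) ^ n" using ff_card_prime_power by blast
  have "n \<noteq> 0"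
  proof
    assume "n = 0" with n ff_card_ge2[where 'a='a] show False by simp
  qed
  thus ?thesis using that n by auto
qed

lemma ff_of_nat_card: "(of_nat CARD('a::{field,finite}) :: 'a) = 0"
proof -
  obtain n where n: "CARD('a) = CHAR('a) ^ n" "n \<ge> 1" by (rule ff_card_pow)
  hence "CHAR('a) dvd CARD('a)" by (simp add: dvd_power)
  thus ?thesis by (simp add: of_nat_eq_0_iff_char_dvd)
qed

definition hmq :: "'a::finite itself \<Rightarrow> nat" where "hmq _ = (CARD('a) - 1) div 2"

locale ffq =
  fixes dummy :: "'a::{field,finite} itself"
  assumes q4: "CARD('a) mod 4 = 1"
begin

lemma char_ne2: "CHAR('a) \<noteq> 2"
proof
  assume c: "CHAR('a) = 2"
  obtain n where n: "CARD('a) = CHAR('a) ^ n" "n \<ge> 1" by (rule ff_card_pow)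
  hence "even (CARD('a))" using c by simp
  thus False using q4 by (metis dvd_mod_iff dvd_refl even_numeral odd_one)
qed

lemma two_nz: "(2::'a) \<noteq> 0"
proof
  assume "(2::'a) = 0"
  hence "(of_nat 2 :: 'a) = 0" by simp
  hence "CHAR('a) dvd 2" by (simp only: of_nat_eq_0_iff_char_dvd)
  hence "CHAR('a) = 1 \<or> CHAR('a) = 2" using two_is_prime_nat prime_nat_iff by blast
  hence "CHAR('a) = 2" by simp
  thus False using char_ne2 by simp
qed

lemma sq_eq_iff: "(y::'a)^2 = z^2 \<longleftrightarrow> y = z \<or> y = -z"
by (rule power2_eq_iff)

lemma card_nz_squares: "2 * card (nz_squares :: 'a set) = CARD('a) - 1"
proof -
  let ?S = "nz_squares :: 'a set"
  have U: "UNIV - {0} = (\<Union>s\<in>?S. {y. y^2 = s})"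
    by (auto simp: nz_squares_def)
  have fib: "card {y::'a. y^2 = s} = 2" if sS: "s \<in> ?S" for s
  proof -
    obtain z where z1: "s = z^2" using sS by (auto simp: nz_squares_def)
    have z: "s = z^2" "z \<noteq> 0" using z1 sS by (auto simp: nz_squares_def)
    have "{y::'a. y^2 = s} = {z, -z}" using z by (auto simp: sq_eq_iff)
    moreover have "z \<noteq> -z"
    proof
      assume "z = -z" hence "2 * z = 0" by simp
      thus False using z two_nz by simp
    qed
    ultimately show ?thesis by simp
  qed
  have "card (UNIV - {0::'a}) = (\<Sum>s\<in>?S. card {y::'a. y^2 = s})"
    unfolding U by (rule card_UN_disjoint) auto
  also have "\<dots> = (\<Sum>s\<in>?S. 2)" by (rule sum.cong) (auto simp: fib)
  finally show ?thesis by simp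
qed

abbreviation hm :: nat where "hm \<equiv> hmq dummy"

lemma hm_facts: "CARD('a) = 2 * hm + 1" "even hm" "hm \<ge> 2" "card (nz_squares :: 'a set) = hm"
proof -
  show q: "CARD('a) = 2 * hm + 1" unfolding hmq_def using q4 by presburger
  show "even hm" unfolding hmq_def using q4 by presburger
  have "CARD('a) \<noteq> 1" using ff_card_ge2[where 'a='a] by simp
  thus "hm \<ge> 2" unfolding hmq_def using q4 ff_card_ge2[where 'a='a] by presburger
  show "card (nz_squares :: 'a set) = hm" using card_nz_squares q by simp
qed

lemma euler_sq: assumes "(z::'a) \<noteq> 0" shows "z \<in> nz_squares \<longleftrightarrow> z ^ hm = 1"
proof
  assume "z \<in> nz_squares"
  then obtain y where y: "z = y^2" "y \<noteq> 0" by (auto simp: nz_squares_def)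
  have "z ^ hm = y ^ (CARD('a) - 1)" using y hm_facts(1) by (simp add: power_mult[symmetric])
  also have "\<dots> = 1" by (rule ff_power_card_minus1[OF y(2)])
  finally show "z ^ hm = 1" .
next
  assume zm: "z ^ hm = 1"
  let ?P = "monom (1::'a) hm - 1"
  have dP: "degree ?P = hm" using hm_facts(3) by (subst diff_conv_add_uminus, subst degree_add_eq_left) (simp_all add: degree_monom_eq)
  hence P0: "?P \<noteq> 0" using hm_facts(3) by auto
  have sub: "(nz_squares :: 'a set) \<subseteq> {x. poly ?P x = 0}"
  proof
    fix s :: 'a assume s: "s \<in> nz_squares"
    then obtain y where y: "s = y^2" "y \<noteq> 0" by (auto simp: nz_squares_def)
    have "s ^ hm = y ^ (CARD('a) - 1)" using y hm_facts(1) by (simp add: power_mult[symmetric])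
    also have "\<dots> = 1" by (rule ff_power_card_minus1[OF y(2)])
    finally show "s \<in> {x. poly ?P x = 0}" by (simp add: poly_monom)
  qed
  have "card {x. poly ?P x = 0} \<le> hm" using card_poly_roots_bound[OF P0] dP by simp
  moreover have "card (nz_squares :: 'a set) \<le> card {x. poly ?P x = 0}"
    using sub by (intro card_mono) auto
  ultimately have eq: "(nz_squares :: 'a set) = {x. poly ?P x = 0}"
    using sub hm_facts(4) by (intro card_subset_eq) auto
  have "z \<in> {x. poly ?P x = 0}" using zm by (simp add: poly_monom)
  thus "z \<in> nz_squares" using eq by blast
qed

lemma euler_pm: assumes "(z::'a) \<noteq> 0" shows "z ^ hm = 1 \<or> z ^ hm = -1"
proof -
  have "(z ^ hm)^2 = 1" using ff_power_card_minus1[OF assms] hm_facts(1)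
    by (simp add: power_mult[symmetric] mult.commute)
  hence "(z^hm - 1) * (z^hm + 1) = 0" by (simp add: algebra_simps power2_eq_square)
  hence "z^hm - 1 = 0 \<or> z^hm + 1 = 0" by simp
  thus ?thesis using eq_neg_iff_add_eq_0[of "z^hm" 1] right_minus_eq[of "z^hm" 1] by blast
qed

lemma euler_val: assumes "(z::'a) \<noteq> 0"
  shows "z ^ hm = (if z \<in> nz_squares then 1 else -1)"
  using euler_sq[OF assms] euler_pm[OF assms] by auto

lemma one_ne_minus_one: "(1::'a) \<noteq> -1"
proof
  assume "(1::'a) = -1" hence "(2::'a) = 0" by (metis one_add_one eq_neg_iff_add_eq_0)
  thus False using two_nz by simp
qed

lemma minus_one_sq: "(-1::'a) \<in> nz_squares"
proof -
  have "(-1::'a)^hm = 1" using hm_facts(2) by simp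
  moreover have "(-1::'a) \<noteq> 0" by simp
  ultimately show ?thesis using euler_sq[of "-1"] by blast
qed

lemma one_sq: "(1::'a) \<in> nz_squares" by (auto simp: nz_squares_def intro: exI[of _ 1])

lemma neg_sq_iff: "-(z::'a) \<in> nz_squares \<longleftrightarrow> z \<in> nz_squares"
proof -
  have *: "-w \<in> nz_squares" if wS: "w \<in> nz_squares" for w :: 'a
  proof -
    obtain y where y: "w = y^2" "w \<noteq> 0" using wS by (auto simp: nz_squares_def)
    obtain u :: 'a where u: "-1 = u^2" using minus_one_sq unfolding nz_squares_def mem_Collect_eq by blast
    have "-w = (u*y)^2" using y by (simp add: power_mult_distrib flip: u)
    thus ?thesis using y by (auto simp: nz_squares_def)
  qed
  show ?thesis using *[of z] *[of "-z"] by auto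
qed

lemma power_sum_ff:
  "(\<Sum>z\<in>UNIV. (z::'a) ^ e) = (if e \<ge> 1 \<and> (CARD('a) - 1) dvd e then -1 else 0)"
proof (cases "e \<ge> 1 \<and> (CARD('a) - 1) dvd e")
  case True
  then obtain u where u: "e = (CARD('a) - 1) * u" "u \<ge> 1" by (auto elim!: dvdE) (metis Nat.lessE One_nat_def gr0I less_one mult_0_right)
  have "(\<Sum>z\<in>UNIV. (z::'a) ^ e) = (\<Sum>z\<in>UNIV. if (z::'a) = 0 then 0 else (1::'a))"
    by (rule sum.cong[OF refl]) (use True u in \<open>auto simp: power_mult ff_power_card_minus1[simplified]\<close>)
  also have "\<dots> = (\<Sum>z\<in>UNIV. (1::'a) - (if (z::'a) = 0 then 1 else 0))" by (rule sum.cong) auto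
  also have "\<dots> = of_nat CARD('a) - 1" by (simp add: sum_subtractf)
  also have "\<dots> = -1" by (simp add: ff_of_nat_card)
  finally show ?thesis using True by simp
next
  case False
  show ?thesis
  proof (cases "e = 0")
    case True thus ?thesis by (simp add: ff_of_nat_card)
  next
    case e0: False
    have "\<exists>a::'a. a \<noteq> 0 \<and> a ^ e \<noteq> 1"
    proof (rule ccontr)
      assume "\<not> ?thesis"
      hence all: "a ^ e = 1" if "a \<noteq> 0" for a :: 'a using that by blast
      define e' where "e' = e mod (CARD('a) - 1)"
      have nd: "\<not> (CARD('a) - 1) dvd e" using False e0 by simp
      hence "e' \<noteq> 0" unfolding e'_def by (simp add: mod_eq_0_iff_dvd)
      hence e'0: "e' > 0" by simp
      have q1: "CARD('a) - 1 > 0" using ff_card_ge2[where 'a='a] by simp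
      have e'l: "e' < CARD('a) - 1" unfolding e'_def using q1 by (rule mod_less_divisor)
      have r: "a ^ e' = 1" if "a \<noteq> 0" for a :: 'a
      proof -
        have "a ^ e = a ^ ((CARD('a) - 1) * (e div (CARD('a) - 1)) + e')" unfolding e'_def by simp
        also have "\<dots> = (a ^ (CARD('a) - 1)) ^ (e div (CARD('a) - 1)) * a ^ e'"
          by (simp only: power_add power_mult)
        finally have "a ^ e = (a ^ (CARD('a) - 1)) ^ (e div (CARD('a) - 1)) * a ^ e'" .
        thus ?thesis using all[OF that] ff_power_card_minus1[OF that] by simp
      qed
      let ?P = "monom (1::'a) e' - 1"
      have dP: "degree ?P = e'" using e'0 by (subst diff_conv_add_uminus, subst degree_add_eq_left) (simp_all add: degree_monom_eq)
      hence P0: "?P \<noteq> 0" using e'0 by auto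
      have "UNIV - {0} \<subseteq> {x. poly ?P x = 0}" using r by (auto simp: poly_monom)
      hence "card (UNIV - {0::'a}) \<le> card {x. poly ?P x = 0}"
        by (intro card_mono) (auto intro: poly_roots_finite[OF P0])
      also have "\<dots> \<le> e'" using card_poly_roots_bound[OF P0] dP by simp
      finally show False using e'l by simp
    qed
    then obtain a :: 'a where a: "a \<noteq> 0" "a ^ e \<noteq> 1" by blast
    have "(\<Sum>z\<in>UNIV. (z::'a) ^ e) = (\<Sum>z\<in>UNIV. (a * z) ^ e)"
      by (rule sum.reindex_bij_witness[of _ "\<lambda>z. a * z" "\<lambda>z. z / a"]) (use a in auto)
    also have "\<dots> = a ^ e * (\<Sum>z\<in>UNIV. z ^ e)" by (simp add: power_mult_distrib sum_distrib_left)
    finally have "(1 - a ^ e) * (\<Sum>z\<in>UNIV. (z::'a) ^ e) = 0" by (simp add: algebra_simps)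
    thus ?thesis using a False by simp
  qed
qed

end


lemma coeff_X1_power: "coeff ([:1, 1:] ^ N :: 'a::comm_semiring_1 poly) k = of_nat (N choose k)"
proof (cases "k \<le> N")
  case True thus ?thesis by (simp add: coeff_linear_poly_power)
next
  case False
  hence "coeff ([:1, 1:] ^ N :: 'a poly) k = 0"
  proof (intro coeff_eq_0)
    have "degree ([:1,1:]^N :: 'a poly) \<le> degree ([:1,1:] :: 'a poly) * N" by (rule degree_power_le)
    also have "\<dots> \<le> N" by (simp split: if_splits)
    finally show "degree ([:1,1:]^N :: 'a poly) < k" using False by simp
  qed
  thus ?thesis using False by (simp add: binomial_eq_0)
qed

lemma lucas_step:
  fixes a b s t :: nat
  assumes pr: "prime CHAR('a::field)" and a: "a < CHAR('a)" and s: "s < CHAR('a)"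
  shows "(of_nat ((a + CHAR('a) * b) choose (s + CHAR('a) * t)) :: 'a)
          = of_nat (a choose s) * of_nat (b choose t)"
proof -
  define p where "p = CHAR('a)"
  have p0: "p > 0" using pr unfolding p_def by (simp add: prime_gt_0_nat)
  let ?X = "[:1, 1:] :: 'a poly"
  have X1: "?X = monom 1 1 + 1" by (simp add: one_pCons monom_Suc monom_0)
  have prp: "prime CHAR('a poly)" using pr by simp
  have "?X ^ p = (monom 1 1) ^ p + 1 ^ p"
    unfolding X1 by (rule freshmans_dream) (use prp in \<open>simp_all add: p_def\<close>)
  hence Xp: "?X ^ p = monom 1 p + 1" by (simp add: monom_power)
  have B: "(monom (1::'a) p + 1) ^ b = (\<Sum>v\<le>b. monom (of_nat (b choose v)) (p * v))"
    by (subst binomial_ring) (simp add: monom_power mult.commute smult_monom of_nat_poly)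
  have A: "?X ^ a = (\<Sum>i\<le>a. monom (of_nat (a choose i)) i)"
    by (rule poly_eqI) (simp add: coeff_X1_power coeff_sum binomial_eq_0 not_le)
  have "?X ^ (a + p * b) = ?X ^ a * (?X ^ p) ^ b" by (simp add: power_add power_mult)
  also have "\<dots> = (\<Sum>i\<le>a. \<Sum>v\<le>b. monom (of_nat (a choose i) * of_nat (b choose v)) (i + p * v))"
    unfolding Xp A B by (simp add: sum_distrib_left sum_distrib_right mult_monom) (rule sum.swap)
  finally have E: "?X ^ (a + p * b) = \<dots>" .
  have key: "i + p * v = s + p * t \<longleftrightarrow> i = s \<and> v = t" if "i \<le> a" for i v
  proof
    assume h: "i + p * v = s + p * t"
    have "i < p" using that a unfolding p_def by simp
    have "(i + p * v) mod p = (s + p * t) mod p" using h by simp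
    hence "i = s" using \<open>i < p\<close> s unfolding p_def by simp
    thus "i = s \<and> v = t" using h p0 by simp
  qed auto
  have "(of_nat ((a + p * b) choose (s + p * t)) :: 'a) = coeff (?X ^ (a + p * b)) (s + p * t)"
    by (simp add: coeff_X1_power)
  also have "\<dots> = (\<Sum>i\<le>a. \<Sum>v\<le>b. if i = s \<and> v = t then of_nat (a choose i) * of_nat (b choose v) else 0)"
    unfolding E coeff_sum coeff_monom
    by (intro sum.cong refl) (use key in auto)
  also have "\<dots> = of_nat (a choose s) * of_nat (b choose t)"
  proof (cases "s \<le> a \<and> t \<le> b")
    case True
    have "(\<Sum>i\<le>a. \<Sum>v\<le>b. if i = s \<and> v = t then of_nat (a choose i) * of_nat (b choose v) else (0::'a))
        = (\<Sum>i\<le>a. if i = s then (\<Sum>v\<le>b. if v = t then of_nat (a choose i) * of_nat (b choose v) else (0::'a)) else 0)"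
      by (rule sum.cong) auto
    also have "\<dots> = of_nat (a choose s) * of_nat (b choose t)" using True by simp
    finally show ?thesis .
  next
    case False
    hence "of_nat (a choose s) * of_nat (b choose t) = (0::'a)" by (auto simp: binomial_eq_0 not_le)
    moreover have "(\<Sum>i\<le>a. \<Sum>v\<le>b. if i = s \<and> v = t then of_nat (a choose i) * of_nat (b choose v) else (0::'a)) = 0"
      using False by (intro sum.neutral ballI) auto
    ultimately show ?thesis by simp
  qed
  finally show ?thesis unfolding p_def .
qed


lemma choose_not_dvd: assumes "prime p" "c < p" "T \<le> c" shows "\<not> p dvd (c choose T)"
proof
  assume "p dvd (c choose T)"
  hence "p dvd fact T * fact (c - T) * (c choose T)" by simp
  hence "p dvd fact c" using binomial_fact_lemma[OF assms(3)] by simp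
  thus False using assms by (simp add: prime_dvd_fact_iff)
qed

definition Kc :: "nat \<Rightarrow> nat \<Rightarrow> nat \<Rightarrow> nat" where "Kc p c T = (\<Sum>t<T. p ^ (t div c))"

lemma Kc_Suc: "Kc p c (Suc T) = Kc p c T + p ^ (T div c)"
  by (simp add: Kc_def)

lemma Kc_small: "T \<le> c \<Longrightarrow> Kc p c T = T"
proof (induction T)
  case 0 thus ?case by (simp add: Kc_def)
next
  case (Suc T)
  hence "T div c = 0" by simp
  thus ?case using Suc by (simp add: Kc_Suc)
qed

lemma Kc_shift: assumes "c > 0" shows "Kc p c (c + T) = c + p * Kc p c T"
proof (induction T)
  case 0 thus ?case by (simp add: Kc_small Kc_def)
next
  case (Suc T)
  have d: "(c + T) div c = Suc (T div c)" using assms by simp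
  have "Kc p c (c + Suc T) = Kc p c (c + T) + p ^ ((c + T) div c)" by (simp add: Kc_Suc)
  also have "\<dots> = c + p * (Kc p c T + p ^ (T div c))" using Suc d by (simp add: algebra_simps)
  finally show ?case by (simp add: Kc_Suc)
qed

definition Ng :: "nat \<Rightarrow> nat \<Rightarrow> nat" where "Ng p n = (\<Sum>i<n. p ^ i)"

lemma Ng_Suc: "Ng p (Suc n) = 1 + p * Ng p n"
  unfolding Ng_def by (subst sum.lessThan_Suc_shift) (simp add: sum_distrib_left)

lemma Ng_geom: assumes "p \<ge> 1" shows "(p - 1) * Ng p n + 1 = p ^ n"
proof (induction n)
  case 0 thus ?case by (simp add: Ng_def)
next
  case (Suc n)
  have "(p - 1) * Ng p (Suc n) + 1 = (p - 1) * Ng p n + 1 + (p - 1) * p ^ n"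
    by (simp add: Ng_def algebra_simps)
  also have "\<dots> = (1 + (p - 1)) * p ^ n" using Suc by (simp add: algebra_simps)
  also have "1 + (p - 1) = p" using assms by simp
  finally show ?case by simp
qed

lemma lucas_chain:
  assumes pr: "prime CHAR('a::field)" and c: "c > 0" "c < CHAR('a)" and T: "T \<le> c * n"
  shows "(of_nat ((c * Ng CHAR('a) n) choose (Kc CHAR('a) c T)) :: 'a) \<noteq> 0"
  using T
proof (induction n arbitrary: T)
  case 0 thus ?case by (simp add: Kc_def Ng_def)
next
  case (Suc n)
  let ?p = "CHAR('a)"
  have M: "c * Ng ?p (Suc n) = c + ?p * (c * Ng ?p n)" by (simp add: Ng_Suc algebra_simps)
  show ?case
  proof (cases "T \<le> c")
    case True
    have "(of_nat ((c + ?p * (c * Ng ?p n)) choose (T + ?p * 0)) :: 'a)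
        = of_nat (c choose T) * of_nat ((c * Ng ?p n) choose 0)"
      by (rule lucas_step) (use pr c True in auto)
    moreover have "(of_nat (c choose T) :: 'a) \<noteq> 0"
      using choose_not_dvd[OF pr c(2) True] by (simp add: of_nat_eq_0_iff_char_dvd)
    ultimately show ?thesis using True M by (simp add: Kc_small)
  next
    case False
    then obtain T' where T': "T = c + T'" by (metis le_add_diff_inverse nat_le_linear)
    have T'le: "T' \<le> c * n" using Suc.prems T' by simp
    have "(of_nat ((c + ?p * (c * Ng ?p n)) choose (c + ?p * Kc ?p c T')) :: 'a)
        = of_nat (c choose c) * of_nat ((c * Ng ?p n) choose (Kc ?p c T'))"
      by (rule lucas_step) (use pr c in auto)
    thus ?thesis using Suc.IH[OF T'le] M T' by (simp add: Kc_shift[OF c(1)])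
  qed
qed

definition dig :: "nat \<Rightarrow> nat \<Rightarrow> nat \<Rightarrow> nat" where "dig p j r = r div p ^ j mod p"

lemma digits_sum: assumes "p > 0" shows "r mod p ^ n = (\<Sum>j<n. dig p j r * p ^ j)"
proof (induction n)
  case 0 thus ?case by simp
next
  case (Suc n)
  have "r mod p ^ Suc n = r mod (p ^ n * p)" by (simp only: power_Suc2)
  also have "\<dots> = p ^ n * (r div p ^ n mod p) + r mod p ^ n" by (rule mod_mult2_eq)
  finally show ?case using Suc by (simp add: dig_def algebra_simps)
qed

lemma dig_lt: "p > 0 \<Longrightarrow> dig p j r < p" by (simp add: dig_def)

definition erot :: "nat \<Rightarrow> nat \<Rightarrow> nat \<Rightarrow> nat \<Rightarrow> nat" where
  "erot p n i r = (\<Sum>j<n. dig p j r * p ^ ((j + i) mod n))"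

lemma rot_bij: fixes n i :: nat assumes "n > 0" shows "bij_betw (\<lambda>j. (j + i) mod n) {..<n} {..<n}"
proof -
  have inj: "inj_on (\<lambda>j. (j + i) mod n) {..<n}"
  proof (rule inj_onI)
    fix j k :: nat assume jk: "j \<in> {..<n}" "k \<in> {..<n}" "(j + i) mod n = (k + i) mod n"
    hence "[j + i = k + i] (mod n)" by (simp add: cong_def)
    hence "[j = k] (mod n)" by (simp add: cong_add_rcancel_nat)
    thus "j = k" using jk by (intro cong_less_modulus_unique_nat) auto
  qed
  moreover have "(\<lambda>j. (j + i) mod n) ` {..<n} = {..<n}"
    by (rule endo_inj_surj) (use inj assms in auto)
  ultimately show ?thesis by (simp add: bij_betw_def)
qed

lemma rot_sum: fixes n i :: nat assumes "n > 0" shows "(\<Sum>j<n. f ((j + i) mod n)) = (\<Sum>j<n. f j)"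
  using sum.reindex_bij_betw[OF rot_bij[OF assms], of f] .

lemma erot_le: assumes "p > 1" "n > 0" shows "erot p n i r \<le> p ^ n - 1"
proof -
  have "erot p n i r \<le> (\<Sum>j<n. (p - 1) * p ^ ((j + i) mod n))"
    unfolding erot_def
  proof (rule sum_mono)
    fix j
    have "dig p j r \<le> p - 1" using dig_lt[of p j r] assms(1) by linarith
    thus "dig p j r * p ^ ((j + i) mod n) \<le> (p - 1) * p ^ ((j + i) mod n)" by (rule mult_right_mono) simp
  qed
  also have "\<dots> = (p - 1) * (\<Sum>j<n. p ^ ((j + i) mod n))" by (simp add: sum_distrib_left)
  also have "(\<Sum>j<n. p ^ ((j + i) mod n)) = Ng p n" unfolding Ng_def by (rule rot_sum[OF assms(2)])
  also have "(p - 1) * Ng p n = p ^ n - 1" using Ng_geom[of p n] assms by simp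
  finally show ?thesis .
qed

lemma erot_sum: assumes "n > 0"
  shows "(\<Sum>i<n. erot p n i r) = (\<Sum>j<n. dig p j r) * Ng p n"
proof -
  have "(\<Sum>i<n. erot p n i r) = (\<Sum>j<n. dig p j r * (\<Sum>i<n. p ^ ((j + i) mod n)))"
    unfolding erot_def by (subst sum.swap) (simp add: sum_distrib_left)
  also have "\<dots> = (\<Sum>j<n. dig p j r * Ng p n)"
  proof (rule sum.cong[OF refl])
    fix j
    have "(\<Sum>i<n. p ^ ((j + i) mod n)) = (\<Sum>i<n. p ^ ((i + j) mod n))" by (simp add: add.commute)
    also have "\<dots> = Ng p n" unfolding Ng_def by (rule rot_sum[OF assms])
    finally show "dig p j r * (\<Sum>i<n. p ^ ((j + i) mod n)) = dig p j r * Ng p n" by simp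
  qed
  also have "\<dots> = (\<Sum>j<n. dig p j r) * Ng p n" by (simp add: sum_distrib_right)
  finally show ?thesis .
qed

lemma erot0: assumes "p > 0" "r < p ^ n" shows "erot p n 0 r = r"
proof -
  have "erot p n 0 r = (\<Sum>j<n. dig p j r * p ^ j)" unfolding erot_def by (intro sum.cong) auto
  also have "\<dots> = r mod p ^ n" using digits_sum[OF assms(1)] by simp
  also have "\<dots> = r" using assms by simp
  finally show ?thesis .
qed

lemma weight1: assumes "p > 1" "r < p ^ n" "r \<noteq> 0" "(\<Sum>j<n. dig p j r) \<le> 1"
  shows "\<exists>j<n. r = p ^ j"
proof -
  have r: "r = (\<Sum>j<n. dig p j r * p ^ j)" using digits_sum[of p r n] assms by simp
  obtain j0 where j0: "j0 < n" "dig p j0 r \<noteq> 0"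
  proof (rule ccontr)
    assume "\<not> thesis"
    hence "\<forall>j<n. dig p j r = 0" using that by blast
    hence "r = 0" using r by simp
    thus False using assms by simp
  qed
  have s: "(\<Sum>j<n. dig p j r) = dig p j0 r + (\<Sum>j\<in>{..<n} - {j0}. dig p j r)"
    using j0 by (simp add: sum.remove)
  have le1: "dig p j0 r + (\<Sum>j\<in>{..<n} - {j0}. dig p j r) \<le> 1" using s assms(4) by simp
  have d1: "dig p j0 r = 1" using le1 j0(2) by linarith
  have rest: "(\<Sum>j\<in>{..<n} - {j0}. dig p j r) = 0" using le1 j0(2) by linarith
  have z: "\<forall>j\<in>{..<n} - {j0}. dig p j r = 0" using rest by simp
  have "r = dig p j0 r * p ^ j0 + (\<Sum>j\<in>{..<n} - {j0}. dig p j r * p ^ j)"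
    using r j0 by (simp add: sum.remove)
  also have "(\<Sum>j\<in>{..<n} - {j0}. dig p j r * p ^ j) = 0" using z by simp
  finally show ?thesis using d1 j0 by auto
qed


context ffq begin

lemma KS_exp_dvd:
  assumes "k \<le> hm" "l \<le> hm"
  shows "(CARD('a) - 1) dvd (hm + k + (hm - l)) \<longleftrightarrow> l = k"
proof -
  have q1: "CARD('a) - 1 = 2 * hm" using hm_facts(1) by simp
  have h2: "hm \<ge> 2" by (rule hm_facts(3))
  show ?thesis
  proof
    assume "(CARD('a) - 1) dvd (hm + k + (hm - l))"
    then obtain t where t: "hm + k + (hm - l) = 2 * hm * t" using q1 by (auto elim!: dvdE)
    show "l = k"
    proof (cases t)
      case 0 thus ?thesis using t h2 by simp
    next
      case (Suc t')
      show ?thesis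
      proof (cases t')
        case 0 thus ?thesis using t Suc assms by simp
      next
        case (Suc t'')
        hence "2 * hm * t \<ge> 2 * hm * 2" using \<open>t = Suc t'\<close> by (intro mult_le_mono2) simp
        thus ?thesis using t assms h2 by linarith
      qed
    qed
  next
    assume "l = k" thus "(CARD('a) - 1) dvd (hm + k + (hm - l))" using q1 assms by (simp add: mult_2)
  qed
qed

lemma KS:
  assumes k: "k \<le> hm"
  shows "(\<Sum>z\<in>UNIV. z ^ (hm + k) * ((u::'a) - z) ^ hm) = - ((-1) ^ (hm - k) * of_nat (hm choose k) * u ^ k)"
proof -
  define cf where "cf l = (of_nat (hm choose l) * u ^ l * (-1) ^ (hm - l) :: 'a)" for l
  have pt: "z ^ (hm + k) * (u - z) ^ hm = (\<Sum>l\<le>hm. cf l * z ^ (hm + k + (hm - l)))" for z :: 'a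
  proof -
    have "(u - z) ^ hm = (u + (- z)) ^ hm" by simp
    also have "\<dots> = (\<Sum>l\<le>hm. of_nat (hm choose l) * u ^ l * (- z) ^ (hm - l))" by (rule binomial_ring)
    finally have "z ^ (hm + k) * (u - z) ^ hm = (\<Sum>l\<le>hm. z ^ (hm + k) * (of_nat (hm choose l) * u ^ l * (- z) ^ (hm - l)))"
      by (simp add: sum_distrib_left)
    also have "\<dots> = (\<Sum>l\<le>hm. cf l * z ^ (hm + k + (hm - l)))"
    proof (rule sum.cong[OF refl])
      fix l
      have "z ^ (hm + k) * (of_nat (hm choose l) * u ^ l * (- z) ^ (hm - l))
          = cf l * (z ^ (hm + k) * z ^ (hm - l))"
        by (simp add: cf_def power_minus[of z] mult_ac)
      also have "z ^ (hm + k) * z ^ (hm - l) = z ^ (hm + k + (hm - l))" by (simp only: power_add)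
      finally show "z ^ (hm + k) * (of_nat (hm choose l) * u ^ l * (- z) ^ (hm - l))
          = cf l * z ^ (hm + k + (hm - l))" .
    qed
    finally show ?thesis .
  qed
  have "(\<Sum>z\<in>UNIV. z ^ (hm + k) * (u - z) ^ hm) = (\<Sum>z\<in>UNIV. \<Sum>l\<le>hm. cf l * z ^ (hm + k + (hm - l)))"
    using pt by simp
  also have "\<dots> = (\<Sum>l\<le>hm. cf l * (\<Sum>z\<in>UNIV. z ^ (hm + k + (hm - l))))"
    by (subst sum.swap) (simp add: sum_distrib_left)
  also have "\<dots> = (\<Sum>l\<le>hm. cf l * (if l = k then -1 else 0))"
  proof (rule sum.cong[OF refl])
    fix l assume l: "l \<in> {..hm}"
    have "hm + k + (hm - l) \<ge> 1" using hm_facts(3) by simp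
    thus "cf l * (\<Sum>z\<in>UNIV. z ^ (hm + k + (hm - l))) = cf l * (if l = k then -1 else 0)"
      using KS_exp_dvd[OF k, of l] l by (simp add: power_sum_ff)
  qed
  also have "\<dots> = - cf k" using k by (simp add: if_distrib cong: if_cong)
  finally show ?thesis by (simp add: cf_def algebra_simps)
qed

end

locale ffqn = ffq +
  fixes n :: nat
  assumes qn: "CARD('a) = CHAR('a) ^ n"
begin

lemma n_pos: "n \<ge> 1"
proof (rule ccontr)
  assume "\<not> n \<ge> 1" hence "n = 0" by simp
  thus False using qn ff_card_ge2[where 'a='a] by simp
qed

lemma p_prime: "prime CHAR('a)" by (rule ff_prime_char)

lemma p_ge3: "CHAR('a) \<ge> 3"
proof -
  have "CHAR('a) \<ge> 2" using p_prime prime_ge_2_nat by blast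
  thus ?thesis using char_ne2 by simp
qed

lemma p_odd: "odd CHAR('a)"
  by (rule prime_odd_nat[OF p_prime]) (use p_ge3 in simp)

lemma hm_eq: "hm = ((CHAR('a) - 1) div 2) * Ng CHAR('a) n"
proof -
  have "(CHAR('a) - 1) * Ng CHAR('a) n + 1 = CARD('a)" using Ng_geom[of "CHAR('a)" n] p_ge3 qn by simp
  hence "(CHAR('a) - 1) * Ng CHAR('a) n = 2 * hm" using hm_facts(1) by simp
  moreover have "CHAR('a) - 1 = 2 * ((CHAR('a) - 1) div 2)" using p_odd by presburger
  ultimately show ?thesis by (metis mult.assoc mult_cancel_left zero_neq_numeral)
qed

lemma frob_mult_n: "(x::'a) ^ (CHAR('a) ^ (n * u)) = x"
proof (induction u)
  case 0 thus ?case by simp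
next
  case (Suc u)
  have e: "CHAR('a) ^ (n * Suc u) = CHAR('a) ^ (n * u) * CHAR('a) ^ n" by (simp add: power_add)
  have "x ^ (CHAR('a) ^ (n * Suc u)) = (x ^ (CHAR('a) ^ (n * u))) ^ (CHAR('a) ^ n)"
    by (simp only: e) (rule power_mult)
  also have "\<dots> = x" using Suc ff_power_card[of x] qn by simp
  finally show ?case .
qed

lemma frob_period: "(x::'a) ^ (CHAR('a) ^ a) = x ^ (CHAR('a) ^ (a mod n))"
proof -
  have "CHAR('a) ^ a = CHAR('a) ^ (n * (a div n)) * CHAR('a) ^ (a mod n)"
    by (simp flip: power_add)
  hence "x ^ (CHAR('a) ^ a) = (x ^ (CHAR('a) ^ (n * (a div n)))) ^ (CHAR('a) ^ (a mod n))"
    by (simp add: power_mult)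
  thus ?thesis by (simp add: frob_mult_n)
qed

lemma pow_sum_helper: "(x::'a) ^ (\<Sum>j\<in>A. d j * P j) = (\<Prod>j\<in>A. (x ^ P j) ^ d j)"
  unfolding power_sum by (rule prod.cong[OF refl]) (metis mult.commute power_mult)

lemma pow_erot:
  assumes r: "r < CARD('a)"
  shows "((x::'a) ^ r) ^ (CHAR('a) ^ i) = x ^ (erot CHAR('a) n i r)"
proof -
  let ?p = "CHAR('a)"
  have p0: "?p > 0" using p_ge3 by simp
  have rr: "r = (\<Sum>j<n. dig ?p j r * ?p ^ j)" using digits_sum[OF p0, of r n] r qn by simp
  have "(x ^ r) ^ (?p ^ i) = x ^ (r * ?p ^ i)" by (simp add: power_mult)
  also have "r * ?p ^ i = (\<Sum>j<n. dig ?p j r * ?p ^ (j + i))"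
    by (subst rr) (simp add: sum_distrib_right power_add mult.assoc)
  also have "x ^ \<dots> = (\<Prod>j<n. (x ^ (?p ^ (j + i))) ^ dig ?p j r)"
    by (rule pow_sum_helper)
  also have "\<dots> = (\<Prod>j<n. (x ^ (?p ^ ((j + i) mod n))) ^ dig ?p j r)"
    by (simp only: frob_period[of x "_ + i"])
  also have "\<dots> = x ^ (erot ?p n i r)"
    unfolding erot_def by (rule pow_sum_helper[symmetric])
  finally show ?thesis .
qed

lemma frob_inj: assumes "(x::'a) ^ (CHAR('a) ^ i) = y ^ (CHAR('a) ^ i)" shows "x = y"
proof -
  have ni: "n * i = i + (n * i - i)" using n_pos by (simp add: le_add_diff_inverse mult_le_mono1)
  have "x = x ^ (CHAR('a) ^ (n * i))" by (simp add: frob_mult_n)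
  also have "\<dots> = (x ^ (CHAR('a) ^ i)) ^ (CHAR('a) ^ (n * i - i))"
    by (subst ni) (simp add: power_add power_mult)
  also have "\<dots> = (y ^ (CHAR('a) ^ i)) ^ (CHAR('a) ^ (n * i - i))" using assms by simp
  also have "\<dots> = y ^ (CHAR('a) ^ (n * i))"
    by (subst (2) ni) (simp add: power_add power_mult)
  also have "\<dots> = y" by (simp add: frob_mult_n)
  finally show ?thesis .
qed

lemma frob_add: "((x::'a) + y) ^ (CHAR('a) ^ i) = x ^ (CHAR('a) ^ i) + y ^ (CHAR('a) ^ i)"
  by (rule freshmans_dream'[OF p_prime refl])

lemma frob_sum: "(sum (f :: 'b \<Rightarrow> 'a) A) ^ (CHAR('a) ^ i) = (\<Sum>a\<in>A. f a ^ (CHAR('a) ^ i))"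
  by (rule freshmans_dream_sum'[OF p_prime refl])

lemma frob_of_nat: "(of_nat k :: 'a) ^ (CHAR('a) ^ i) = of_nat k"
proof (induction k)
  case 0 thus ?case using p_ge3 by (simp add: power_0_left)
next
  case (Suc k)
  have "(of_nat (Suc k) :: 'a) ^ (CHAR('a) ^ i) = (of_nat k + 1) ^ (CHAR('a) ^ i)" by (simp add: add.commute)
  also have "\<dots> = of_nat k + 1" by (simp only: frob_add Suc) simp
  finally show ?case by simp
qed

lemma frob_gal: "(\<lambda>x::'a. x ^ (CHAR('a) ^ i)) \<in> galois_prime"
proof -
  have inj: "inj (\<lambda>x::'a. x ^ (CHAR('a) ^ i))" by (rule injI) (rule frob_inj)
  have "surj (\<lambda>x::'a. x ^ (CHAR('a) ^ i))" by (rule finite_UNIV_inj_surj[OF _ inj]) simp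
  with inj have "bij (\<lambda>x::'a. x ^ (CHAR('a) ^ i))" by (simp add: bij_def)
  thus ?thesis unfolding galois_prime_def
    by (simp add: frob_add power_mult_distrib frob_of_nat)
qed

lemma uniq_poly:
  assumes "degree P < CARD('a)" "degree Q < CARD('a)" "\<And>x. poly P x = poly (Q :: 'a poly) x"
  shows "P = Q"
  by (rule poly_eqI_degree[of UNIV]) (use assms in auto)

lemma erot_inj:
  assumes "r < CARD('a)" "r' < CARD('a)" "erot CHAR('a) n i r = erot CHAR('a) n i r'"
  shows "r = r'"
proof -
  have "(x ^ r) ^ (CHAR('a) ^ i) = (x ^ r') ^ (CHAR('a) ^ i)" for x :: 'a
    using pow_erot[OF assms(1)] pow_erot[OF assms(2)] assms(3) by simp
  hence "x ^ r = x ^ r'" for x :: 'a using frob_inj by blast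
  hence "monom (1::'a) r = monom 1 r'"
    by (intro uniq_poly) (use assms degree_monom_le[of "1::'a"] in \<open>auto simp: poly_monom intro: le_less_trans\<close>)
  hence "coeff (monom (1::'a) r) r = coeff (monom 1 r') r" by simp
  thus ?thesis by (simp split: if_splits)
qed

end


lemma lucas_pow:
  assumes pr: "prime CHAR('a::field)" and c: "c > 0" "c < CHAR('a)" and i: "i < n"
  shows "(of_nat ((c * Ng CHAR('a) n) choose (CHAR('a) ^ i)) :: 'a) \<noteq> 0"
  using i
proof (induction n arbitrary: i)
  case 0 thus ?case by simp
next
  case (Suc n)
  let ?p = "CHAR('a)"
  have M: "c * Ng ?p (Suc n) = c + ?p * (c * Ng ?p n)" by (simp add: Ng_Suc algebra_simps)
  show ?case
  proof (cases i)
    case 0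
    have "(of_nat ((c + ?p * (c * Ng ?p n)) choose (1 + ?p * 0)) :: 'a)
        = of_nat (c choose 1) * of_nat ((c * Ng ?p n) choose 0)"
      by (rule lucas_step) (use pr c in auto)
    moreover have "(of_nat c :: 'a) \<noteq> 0"
      using c by (auto simp: of_nat_eq_0_iff_char_dvd dest: dvd_imp_le)
    ultimately show ?thesis using 0 M by simp
  next
    case (Suc i')
    have "(of_nat ((c + ?p * (c * Ng ?p n)) choose (0 + ?p * ?p ^ i')) :: 'a)
        = of_nat (c choose 0) * of_nat ((c * Ng ?p n) choose (?p ^ i'))"
      by (rule lucas_step) (use pr c in auto)
    moreover have "i' < n" using Suc.prems Suc by simp
    ultimately show ?thesis using Suc.IH[of i'] M Suc by simp
  qed
qed

lemma Kc_full: assumes "c > 0" shows "Kc p c (c * n) = c * Ng p n"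
proof (induction n)
  case 0 thus ?case by (simp add: Kc_def Ng_def)
next
  case (Suc n)
  have "Kc p c (c * Suc n) = Kc p c (c + c * n)" by simp
  also have "\<dots> = c + p * (c * Ng p n)" using Suc Kc_shift[OF assms] by simp
  also have "\<dots> = c * Ng p (Suc n)" by (simp add: Ng_Suc algebra_simps)
  finally show ?case .
qed

lemma Kc_mono: "T \<le> T' \<Longrightarrow> Kc p c T \<le> Kc p c T'"
  unfolding Kc_def by (rule sum_mono2) auto

lemma sum_div_group: assumes "c > 0" shows "(\<Sum>t<c * n. f (t div c)) = c * (\<Sum>i<n. f i :: nat)"
proof -
  have "(\<Sum>t<c * n. f (t div c)) = (\<Sum>m<n. \<Sum>t\<in>{m * c..<m * c + c}. f (t div c))"
    using sum.nat_group[where g="\<lambda>t. f (t div c)" and n=n and k=c] by (simp add: mult.commute)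
  also have "\<dots> = (\<Sum>m<n. c * f m)"
  proof (rule sum.cong[OF refl])
    fix m
    have "(\<Sum>t\<in>{m * c..<m * c + c}. f (t div c)) = (\<Sum>t\<in>{m * c..<m * c + c}. f m)"
    proof (rule sum.cong[OF refl])
      fix t assume "t \<in> {m * c..<m * c + c}"
      then obtain s where "t = m * c + s" "s < c" by (metis atLeastLessThan_iff le_Suc_ex nat_add_left_cancel_less)
      thus "f (t div c) = f m" using assms by simp
    qed
    thus "(\<Sum>t\<in>{m * c..<m * c + c}. f (t div c)) = c * f m" by simp
  qed
  finally show ?thesis by (simp add: sum_distrib_left)
qed

locale carl = ffqn +
  fixes g :: "'a \<Rightarrow> 'a"
  assumes bijg: "bij g" and g0: "g 0 = 0"
    and adj: "\<And>x y. (y - x \<in> nz_squares) = (g y - g x \<in> nz_squares)"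
begin

lemma powm: "(g x - g y) ^ hm = (x - y) ^ hm"
proof (cases "x = y")
  case True thus ?thesis by simp
next
  case False
  have gxy: "g x - g y \<noteq> 0" using False bijg by (auto simp: bij_def inj_eq)
  have "(x - y \<in> nz_squares) = (g x - g y \<in> nz_squares)" by (rule adj)
  thus ?thesis using euler_val[OF gxy] euler_val[of "x - y"] False by simp
qed

lemma F1:
  assumes k: "k \<le> hm" and C: "(of_nat (hm choose k) :: 'a) \<noteq> 0"
  shows "\<exists>P. degree P \<le> hm \<and> (\<forall>x. poly P x = g x ^ k)"
proof -
  define Q where "Q = (\<Sum>y\<in>UNIV. smult (g y ^ (hm + k)) ([:-y, 1:] ^ hm))"
  define \<kappa> where "\<kappa> = - ((-1) ^ (hm - k) * (of_nat (hm choose k) :: 'a))"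
  have \<kappa>0: "\<kappa> \<noteq> 0" using C unfolding \<kappa>_def by simp
  have pQ: "poly Q x = \<kappa> * g x ^ k" for x
  proof -
    have "poly Q x = (\<Sum>y\<in>UNIV. g y ^ (hm + k) * (x - y) ^ hm)"
      unfolding Q_def by (simp add: poly_sum)
    also have "\<dots> = (\<Sum>y\<in>UNIV. g y ^ (hm + k) * (g x - g y) ^ hm)" by (simp add: powm)
    also have "\<dots> = (\<Sum>z\<in>UNIV. z ^ (hm + k) * (g x - z) ^ hm)"
      using sum.reindex_bij_betw[of g UNIV UNIV "\<lambda>z. z ^ (hm + k) * (g x - z) ^ hm"] bijg
      by (simp add: bij_betw_def bij_def)
    also have "\<dots> = \<kappa> * g x ^ k" unfolding \<kappa>_def by (simp add: KS[OF k])
    finally show ?thesis .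
  qed
  have dQ: "degree Q \<le> hm"
    unfolding Q_def
  proof (rule degree_sum_le)
    fix y :: 'a
    have "degree ([:-y, 1:] ^ hm) \<le> degree [:-y, 1:] * hm" by (rule degree_power_le)
    hence "degree ([:-y, 1:] ^ hm) \<le> hm" by simp
    thus "degree (smult (g y ^ (hm + k)) ([:- y, 1:] ^ hm)) \<le> hm"
      using degree_smult_le order_trans by blast
  qed simp
  show ?thesis
  proof (intro exI conjI allI)
    show "degree (smult (inverse \<kappa>) Q) \<le> hm" using dQ degree_smult_le order_trans by blast
    fix x show "poly (smult (inverse \<kappa>) Q) x = g x ^ k" using pQ \<kappa>0 by simp
  qed
qed

end


context carl begin

lemma carlitz_main: "\<exists>a j. j < n \<and> (\<forall>x. g x = a * x ^ (CHAR('a) ^ j))"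
proof -
  define p where "p = CHAR('a)"
  define c where "c = (p - 1) div 2"
  have p3: "p \<ge> 3" unfolding p_def by (rule p_ge3)
  have pr: "prime p" unfolding p_def by (rule p_prime)
  have c0: "c > 0" unfolding c_def using p3 by simp
  have cp: "c < p" unfolding c_def using p3 by simp
  have hmc: "hm = c * Ng p n" unfolding c_def p_def by (rule hm_eq)
  have q: "CARD('a) = 2 * hm + 1" by (rule hm_facts(1))
  have n0: "n > 0" using n_pos by simp
  have qpn: "CARD('a) = p ^ n" unfolding p_def by (rule qn)
  obtain x0 where x0: "g x0 = 1" using bijg by (metis bij_pointE)
  have C1: "(of_nat (hm choose 1) :: 'a) \<noteq> 0"
    using lucas_pow[OF p_prime, of c 0 n] c0 cp n0 hmc unfolding p_def by simp
  obtain P1 where P1: "degree P1 \<le> hm" "\<And>x. poly P1 x = g x"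
    using F1[of 1] C1 hm_facts(3) by auto
  define d0 where "d0 = degree P1"
  have d0q: "d0 < CARD('a)" using P1(1) q unfolding d0_def by simp
  define G where "G i = (\<Sum>r\<le>d0. monom (coeff P1 r ^ (p ^ i)) (erot p n i r))" for i
  have polyG: "poly (G i) x = g x ^ (p ^ i)" for i x
  proof -
    have "poly (G i) x = (\<Sum>r\<le>d0. coeff P1 r ^ (p ^ i) * x ^ (erot p n i r))"
      unfolding G_def by (simp add: poly_sum poly_monom)
    also have "\<dots> = (\<Sum>r\<le>d0. (coeff P1 r * x ^ r) ^ (p ^ i))"
    proof (rule sum.cong[OF refl])
      fix r assume "r \<in> {..d0}"
      hence "r < CARD('a)" using d0q by simp
      thus "coeff P1 r ^ (p ^ i) * x ^ (erot p n i r) = (coeff P1 r * x ^ r) ^ (p ^ i)"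
        using pow_erot[of r x i] unfolding p_def by (simp add: power_mult_distrib)
    qed
    also have "\<dots> = (\<Sum>r\<le>d0. coeff P1 r * x ^ r) ^ (p ^ i)"
      unfolding p_def by (rule frob_sum[symmetric])
    also have "(\<Sum>r\<le>d0. coeff P1 r * x ^ r) = g x" using P1(2)[of x] unfolding d0_def poly_altdef by simp
    finally show ?thesis .
  qed
  have degG: "degree (G i) < CARD('a)" for i
  proof -
    have "degree (G i) \<le> p ^ n - 1"
      unfolding G_def
    proof (rule degree_sum_le)
      fix r
      have "degree (monom (coeff P1 r ^ (p ^ i)) (erot p n i r)) \<le> erot p n i r" by (rule degree_monom_le)
      also have "\<dots> \<le> p ^ n - 1" using erot_le[of p n i r] p3 n0 by simp
      finally show "degree (monom (coeff P1 r ^ (p ^ i)) (erot p n i r)) \<le> p ^ n - 1" .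
    qed simp
    thus ?thesis using qpn ff_card_ge2[where 'a='a] by simp
  qed
  have coeffG: "coeff (G i) (erot p n i r0) = coeff P1 r0 ^ (p ^ i)" if r0: "r0 \<le> d0" for i r0
  proof -
    have "coeff (G i) (erot p n i r0) = (\<Sum>r\<le>d0. if r = r0 then coeff P1 r ^ (p ^ i) else 0)"
      unfolding G_def coeff_sum coeff_monom
    proof (rule sum.cong[OF refl])
      fix r assume "r \<in> {..d0}"
      hence "r < CARD('a)" "r0 < CARD('a)" using d0q r0 by auto
      hence "erot p n i r = erot p n i r0 \<longleftrightarrow> r = r0" using erot_inj[of r r0 i] unfolding p_def by auto
      thus "(if erot p n i r = erot p n i r0 then coeff P1 r ^ p ^ i else 0) = (if r = r0 then coeff P1 r ^ p ^ i else 0)"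
        by simp
    qed
    also have "\<dots> = coeff P1 r0 ^ (p ^ i)" using r0 by (simp add: sum.delta')
    finally show ?thesis .
  qed
  have pi_le: "p ^ i \<le> hm" if "i < n" for i
  proof -
    have "p ^ i \<le> Ng p n" unfolding Ng_def using that by (intro member_le_sum) auto
    also have "\<dots> \<le> hm" using hmc c0 by simp
    finally show ?thesis .
  qed
  have degGhm: "degree (G i) \<le> hm" if iN: "i < n" for i
  proof -
    have "(of_nat (hm choose (p ^ i)) :: 'a) \<noteq> 0"
      using lucas_pow[OF p_prime, of c i n] c0 cp iN hmc unfolding p_def by simp
    then obtain P where P: "degree P \<le> hm" "\<And>x. poly P x = g x ^ (p ^ i)"
      using F1[of "p ^ i"] pi_le[OF iN] by auto
    have "G i = P" by (rule uniq_poly) (use degG[of i] P q polyG in auto)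
    thus ?thesis using P by simp
  qed
  have Gnz: "G i \<noteq> 0" for i
  proof
    assume "G i = 0" hence "poly (G i) x0 = 0" by simp
    thus False using polyG[of i x0] x0 by simp
  qed
  define D where "D i = degree (G i)" for i
  define Pr where "Pr T = (\<Prod>t<T. G (t div c))" for T
  have chain: "(\<forall>x. poly (Pr T) x = g x ^ Kc p c T) \<and> degree (Pr T) = (\<Sum>t<T. D (t div c)) \<and> degree (Pr T) \<le> hm"
    if "T \<le> c * n" for T
    using that
  proof (induction T)
    case 0 thus ?case by (simp add: Pr_def Kc_def)
  next
    case (Suc T)
    have IH: "\<forall>x. poly (Pr T) x = g x ^ Kc p c T" "degree (Pr T) = (\<Sum>t<T. D (t div c))" "degree (Pr T) \<le> hm"
      using Suc by auto
    have Tn: "T div c < n" using Suc.prems by (intro less_mult_imp_div_less) (simp add: mult.commute)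
    have PrS: "Pr (Suc T) = Pr T * G (T div c)" by (simp add: Pr_def)
    have polyS: "poly (Pr (Suc T)) x = g x ^ Kc p c (Suc T)" for x
      using IH(1) by (simp add: PrS polyG Kc_Suc power_add)
    have PrT0: "Pr T \<noteq> 0"
    proof
      assume "Pr T = 0" hence "poly (Pr T) x0 = 0" by simp
      thus False using IH(1) x0 by simp
    qed
    have degS: "degree (Pr (Suc T)) = (\<Sum>t<Suc T. D (t div c))"
      using IH(2) PrT0 Gnz by (simp add: PrS degree_mult_eq D_def)
    have KS_le: "Kc p c (Suc T) \<le> hm"
      using Kc_mono[OF Suc.prems, of p c] Kc_full[OF c0, of p n] hmc by simp
    have CS: "(of_nat (hm choose Kc p c (Suc T)) :: 'a) \<noteq> 0"
      using lucas_chain[OF p_prime, of c "Suc T" n] c0 cp Suc.prems hmc unfolding p_def by simp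
    obtain P where P: "degree P \<le> hm" "\<And>x. poly P x = g x ^ Kc p c (Suc T)"
      using F1[OF KS_le CS] by auto
    have "degree (Pr (Suc T)) \<le> hm + hm"
      using IH(3) degGhm[OF Tn] PrT0 Gnz by (simp add: PrS degree_mult_eq)
    hence "Pr (Suc T) = P" by (intro uniq_poly) (use P q polyS in auto)
    thus ?case using P polyS degS by simp
  qed
  have chn: "degree (Pr (c * n)) = (\<Sum>t<c * n. D (t div c))" "\<forall>x. poly (Pr (c * n)) x = g x ^ hm"
    using chain[of "c * n"] Kc_full[OF c0, of p n] hmc by auto
  have "Pr (c * n) = monom 1 hm"
  proof (rule uniq_poly)
    show "degree (Pr (c * n)) < CARD('a)" using chain[of "c * n"] q by simp
    show "degree (monom (1::'a) hm) < CARD('a)" using q by (simp add: degree_monom_eq)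
    fix x
    have "g x ^ hm = (g x - g 0) ^ hm" using g0 by simp
    also have "\<dots> = x ^ hm" using powm[of x 0] by simp
    finally show "poly (Pr (c * n)) x = poly (monom 1 hm) x" using chn(2) by (simp add: poly_monom)
  qed
  hence "(\<Sum>t<c * n. D (t div c)) = hm" using chn(1) by (simp add: degree_monom_eq)
  hence "c * (\<Sum>i<n. D i) = c * Ng p n" using sum_div_group[OF c0, where n=n and f=D] hmc by simp
  hence sumD: "(\<Sum>i<n. D i) = Ng p n" using c0 by simp
  have Ng0: "Ng p n > 0" unfolding Ng_def using n0 by (intro sum_pos2[of _ 0]) auto
  have stepD: "r = D 0 \<and> (\<exists>j<n. r = p ^ j)" if r: "r \<le> d0" "coeff P1 r \<noteq> 0" "r \<noteq> 0" for r
  proof -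
    have rq: "r < p ^ n" using r d0q qpn by simp
    have le: "erot p n i r \<le> D i" if "i < n" for i
      unfolding D_def using coeffG[OF r(1), of i] r(2) by (intro le_degree) simp
    have "(\<Sum>j<n. dig p j r) * Ng p n = (\<Sum>i<n. erot p n i r)" using erot_sum[OF n0] by simp
    also have "\<dots> \<le> (\<Sum>i<n. D i)" using le by (intro sum_mono) auto
    finally have "(\<Sum>j<n. dig p j r) * Ng p n \<le> 1 * Ng p n" using sumD by simp
    hence w1: "(\<Sum>j<n. dig p j r) \<le> 1" using Ng0 by (meson mult_le_cancel2 not_gr0)
    have w0: "(\<Sum>j<n. dig p j r) \<noteq> 0"
    proof
      assume "(\<Sum>j<n. dig p j r) = 0"
      hence "\<forall>j<n. dig p j r = 0" by simp
      moreover have "r = (\<Sum>j<n. dig p j r * p ^ j)" using digits_sum[of p r n] p3 rq by simp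
      ultimately have "r = 0" by simp
      thus False using r by simp
    qed
    have pj: "\<exists>j<n. r = p ^ j" using weight1[of p r n] p3 rq r(3) w1 by simp
    have w: "(\<Sum>j<n. dig p j r) = 1" using w1 w0 by linarith
    have "(\<Sum>i<n. erot p n i r) = (\<Sum>i<n. D i)" using erot_sum[OF n0, of p r] sumD by (simp add: w)
    moreover have "(\<Sum>i<n. D i - erot p n i r) = (\<Sum>i<n. D i) - (\<Sum>i<n. erot p n i r)"
      by (rule sum_subtractf_nat) (use le in auto)
    ultimately have "(\<Sum>i<n. D i - erot p n i r) = 0" by simp
    hence "\<forall>i\<in>{..<n}. D i - erot p n i r = 0" by (subst (asm) sum_eq_0_iff) auto
    hence "D 0 - erot p n 0 r = 0" using n0 by simp
    moreover have "erot p n 0 r = r" using erot0[of p r n] p3 rq by simp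
    moreover have "r \<le> D 0" using le[of 0] n0 \<open>erot p n 0 r = r\<close> by simp
    ultimately show ?thesis using pj by simp
  qed
  have P10: "P1 \<noteq> 0"
  proof
    assume "P1 = 0" hence "poly P1 x0 = 0" by simp
    thus False using P1(2)[of x0] x0 by simp
  qed
  have c00: "coeff P1 0 = 0" using P1(2)[of 0] g0 by (simp add: poly_0_coeff_0)
  have d0nz: "d0 \<noteq> 0"
  proof
    assume "d0 = 0"
    hence "coeff P1 d0 = 0" using c00 by simp
    thus False using P10 unfolding d0_def by simp
  qed
  have lc: "coeff P1 d0 \<noteq> 0" using P10 unfolding d0_def by simp
  have sd: "d0 = D 0 \<and> (\<exists>j<n. d0 = p ^ j)" using stepD[of d0] lc d0nz by blast
  then obtain j where j: "j < n" "d0 = p ^ j" by blast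
  have dD: "d0 = D 0" using sd by blast
  have "P1 = monom (coeff P1 d0) d0"
  proof (rule poly_eqI)
    fix r
    show "coeff P1 r = coeff (monom (coeff P1 d0) d0) r"
    proof (cases "coeff P1 r = 0")
      case True
      have "r \<noteq> d0" using True lc by blast
      thus ?thesis using True by simp
    next
      case False
      hence "r \<le> d0" unfolding d0_def by (rule le_degree)
      moreover have "r \<noteq> 0"
      proof
        assume "r = 0" thus False using False c00 by simp
      qed
      ultimately have "r = D 0" using stepD[of r] False by blast
      thus ?thesis using dD by simp
    qed
  qed
  hence Pm: "P1 = monom (coeff P1 d0) d0" .
  have gx: "g x = coeff P1 d0 * x ^ (CHAR('a) ^ j)" for x
  proof -
    have "g x = poly P1 x" using P1(2) by simp
    also have "\<dots> = poly (monom (coeff P1 d0) d0) x" using Pm by simp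
    also have "\<dots> = coeff P1 d0 * x ^ d0" by (simp add: poly_monom)
    finally show ?thesis using j(2) unfolding p_def by simp
  qed
  show ?thesis using j(1) gx by blast
qed

end


lemma gal_basic:
  assumes "\<sigma> \<in> galois_prime"
  shows "\<sigma> 0 = 0" "\<And>x. \<sigma> (- x) = - \<sigma> x" "\<And>x y. \<sigma> (x - y) = \<sigma> x - \<sigma> y" "inj \<sigma>" "surj \<sigma>"
    "\<And>x y. \<sigma> (x + y) = \<sigma> x + \<sigma> y" "\<And>x y. \<sigma> (x * y) = \<sigma> x * \<sigma> y"
proof -
  have add: "\<And>x y. \<sigma> (x + y) = \<sigma> x + \<sigma> y" and mul: "\<And>x y. \<sigma> (x * y) = \<sigma> x * \<sigma> y" and b: "bij \<sigma>"
    using assms unfolding galois_prime_def by auto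
  show "\<And>x y. \<sigma> (x + y) = \<sigma> x + \<sigma> y" "\<And>x y. \<sigma> (x * y) = \<sigma> x * \<sigma> y" by (fact add, fact mul)
  have "\<sigma> 0 = \<sigma> 0 + \<sigma> 0" using add[of 0 0] by simp
  thus s0: "\<sigma> 0 = 0" by (simp only: add_cancel_right_right)
  show neg: "\<sigma> (- x) = - \<sigma> x" for x
  proof -
    have "\<sigma> (x + - x) = \<sigma> x + \<sigma> (- x)" by (rule add)
    hence "\<sigma> x + \<sigma> (- x) = 0" using s0 by simp
    from add.inverse_unique[OF this] show ?thesis by simp
  qed
  show "\<sigma> (x - y) = \<sigma> x - \<sigma> y" for x y
    using add[of x "- y"] neg[of y] by simp
  show "inj \<sigma>" "surj \<sigma>" using b by (auto simp: bij_def)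
qed

lemma gal_sq: assumes "\<sigma> \<in> galois_prime" shows "\<sigma> d \<in> nz_squares \<longleftrightarrow> d \<in> nz_squares"
proof
  note gb = gal_basic[OF assms]
  assume "\<sigma> d \<in> nz_squares"
  then obtain z where z: "\<sigma> d = z^2" "\<sigma> d \<noteq> 0" unfolding nz_squares_def mem_Collect_eq by blast
  obtain w where w: "z = \<sigma> w" using gb(5) by (metis surjD)
  have "\<sigma> d = \<sigma> (w^2)" using z w gb(7) by (simp add: power2_eq_square)
  hence "d = w^2" using gb(4) by (simp add: inj_eq)
  moreover have "d \<noteq> 0" using z gb(1) by auto
  ultimately show "d \<in> nz_squares" unfolding nz_squares_def mem_Collect_eq by blast
next
  note gb = gal_basic[OF assms]
  assume "d \<in> nz_squares"
  then obtain w where w: "d = w^2" "d \<noteq> 0" unfolding nz_squares_def mem_Collect_eq by blast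
  have "\<sigma> d = (\<sigma> w)^2" using w gb(7) by (simp add: power2_eq_square)
  moreover have "\<sigma> d \<noteq> 0" using w gb(1) gb(4) by (metis injD)
  ultimately show "\<sigma> d \<in> nz_squares" unfolding nz_squares_def mem_Collect_eq by blast
qed

lemma mult_sq: assumes "(t::'a::field) \<in> nz_squares" shows "t * e \<in> nz_squares \<longleftrightarrow> e \<in> nz_squares"
proof -
  obtain y where y: "t = y^2" "t \<noteq> 0" using assms unfolding nz_squares_def mem_Collect_eq by blast
  have y0: "y \<noteq> 0" using y by auto
  show ?thesis
  proof
    assume "t * e \<in> nz_squares"
    then obtain z where z: "t * e = z^2" "t * e \<noteq> 0" unfolding nz_squares_def mem_Collect_eq by blast
    have e1: "e = (z / y)^2" using z y y0 by (simp add: power_divide field_simps)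
    have e2: "e \<noteq> 0" using z(2) by auto
    show "e \<in> nz_squares" unfolding nz_squares_def mem_Collect_eq using e1 e2 by blast
  next
    assume "e \<in> nz_squares"
    then obtain z where z: "e = z^2" "e \<noteq> 0" unfolding nz_squares_def mem_Collect_eq by blast
    have e1: "t * e = (y * z)^2" using z y by (simp add: power_mult_distrib)
    have e2: "t * e \<noteq> 0" using z y by simp
    show "t * e \<in> nz_squares" unfolding nz_squares_def mem_Collect_eq using e1 e2 by blast
  qed
qed

theorem proposition3p2:
  fixes \<alpha> \<beta> :: "'a::{field,finite} \<Rightarrow> 'l::prime_card mod_ring"
  assumes "CARD('a) mod 4 = 1"
    and "CARD('l) \<noteq> CHAR('a)"
    and "voltage_assignment \<alpha>" and "voltage_assignment \<beta>"
  shows "cover_iso \<alpha> \<beta> f \<longleftrightarrow>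
    (\<exists>t \<sigma> a k. t \<in> nz_squares \<and> \<sigma> \<in> galois_prime \<and>
        (\<forall>s\<in>nz_squares. \<alpha> s = \<beta> (t * \<sigma> s)) \<and>
        f = (\<lambda>(x, i). (t * \<sigma> x + a, i + k)))"
proof -
  interpret ffq "TYPE('a)" by unfold_locales (rule assms(1))
  obtain n where qn: "CARD('a) = CHAR('a) ^ n" using ff_card_prime_power by blast
  interpret ffqn "TYPE('a)" n by unfold_locales (rule qn)
  show ?thesis
  proof
    assume "\<exists>t \<sigma> a k. t \<in> nz_squares \<and> \<sigma> \<in> galois_prime \<and>
        (\<forall>s\<in>nz_squares. \<alpha> s = \<beta> (t * \<sigma> s)) \<and> f = (\<lambda>(x, i). (t * \<sigma> x + a, i + k))"
    then obtain t \<sigma> a k where t: "t \<in> nz_squares" and \<sigma>: "\<sigma> \<in> galois_prime"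
      and ab: "\<forall>s\<in>nz_squares. \<alpha> s = \<beta> (t * \<sigma> s)" and f: "f = (\<lambda>(x, i). (t * \<sigma> x + a, i + k))"
      by blast
    note gb = gal_basic[OF \<sigma>]
    have t0: "t \<noteq> 0" using t unfolding nz_squares_def mem_Collect_eq by blast
    have inj: "inj f"
    proof (rule injI)
      fix u v assume "f u = f v"
      then obtain x i y j where u: "u = (x, i)" and v: "v = (y, j)"
        and e: "t * \<sigma> x + a = t * \<sigma> y + a" "i + k = j + k"
        using f by (cases u, cases v) auto
      have "\<sigma> x = \<sigma> y" using e t0 by simp
      hence "x = y" using gb(4) by (simp add: inj_eq)
      thus "u = v" using u v e by simp
    qed
    have bij: "bij f" using inj finite_UNIV_inj_surj[OF _ inj] by (simp add: bij_def)
    have adjf: "volt_adj \<alpha> u v \<longleftrightarrow> volt_adj \<beta> (f u) (f v)" for u v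
    proof -
      obtain x i y j where u: "u = (x, i)" and v: "v = (y, j)" by (cases u, cases v) auto
      have d: "fst (f v) - fst (f u) = t * \<sigma> (y - x)" using u v f by (simp add: gb(3) algebra_simps)
      have d2: "snd (f v) - snd (f u) = j - i" using u v f by simp
      have "volt_adj \<beta> (f u) (f v) \<longleftrightarrow> (y - x \<in> nz_squares \<and> j - i = \<beta> (t * \<sigma> (y - x)))"
        unfolding volt_adj_def d d2 using mult_sq[OF t] gal_sq[OF \<sigma>] by simp
      also have "\<dots> \<longleftrightarrow> (y - x \<in> nz_squares \<and> j - i = \<alpha> (y - x))" using ab by auto
      also have "\<dots> \<longleftrightarrow> volt_adj \<alpha> u v" unfolding volt_adj_def u v by simp
      finally show ?thesis by simp
    qed
    have eqv: "f (x, i + j) = (fst (f (x, i)), snd (f (x, i)) + j)" for x i j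
      using f by (simp add: algebra_simps)
    show "cover_iso \<alpha> \<beta> f" unfolding cover_iso_def using bij adjf eqv by blast
  next
    assume ci: "cover_iso \<alpha> \<beta> f"
    have bijf: "bij f" and adjf: "\<And>u v. volt_adj \<alpha> u v \<longleftrightarrow> volt_adj \<beta> (f u) (f v)"
      and eqv: "\<And>x i j. f (x, i + j) = (fst (f (x, i)), snd (f (x, i)) + j)"
      using ci unfolding cover_iso_def by auto
    define G where "G x = fst (f (x, 0))" for x
    define h where "h x = snd (f (x, 0))" for x
    have fx: "f (x, i) = (G x, h x + i)" for x i
      using eqv[of x 0 i] unfolding G_def h_def by simp
    have injG: "inj G"
    proof (rule injI)
      fix x y assume e: "G x = G y"
      have "f (x, 0) = f (y, h x - h y)" using e by (simp add: fx)
      hence "(x, 0) = (y, h x - h y)" using bijf by (simp add: bij_def inj_eq)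
      thus "x = y" by simp
    qed
    have bijG: "bij G" using injG finite_UNIV_inj_surj[OF _ injG] by (simp add: bij_def)
    have adjG: "(y - x \<in> nz_squares) = (G y - G x \<in> nz_squares)" for x y
    proof
      assume s: "y - x \<in> nz_squares"
      have "volt_adj \<alpha> (x, 0) (y, \<alpha> (y - x))" using s unfolding volt_adj_def by simp
      hence "volt_adj \<beta> (f (x, 0)) (f (y, \<alpha> (y - x)))" using adjf by blast
      thus "G y - G x \<in> nz_squares" unfolding volt_adj_def fx by simp
    next
      assume s: "G y - G x \<in> nz_squares"
      have "volt_adj \<beta> (f (x, 0)) (f (y, \<beta> (G y - G x) + h x - h y))"
        using s unfolding volt_adj_def fx by simp
      hence "volt_adj \<alpha> (x, 0) (y, \<beta> (G y - G x) + h x - h y)" using adjf by blast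
      thus "y - x \<in> nz_squares" unfolding volt_adj_def by simp
    qed
    define G' where "G' x = G x - G 0" for x
    have bijG': "bij G'"
    proof -
      have "inj G'" using injG by (auto simp: inj_def G'_def)
      thus ?thesis using finite_UNIV_inj_surj[of G'] by (simp add: bij_def)
    qed
    have adjG': "(y - x \<in> nz_squares) = (G' y - G' x \<in> nz_squares)" for x y
    proof -
      have e: "G' y - G' x = G y - G x" unfolding G'_def by simp
      show ?thesis unfolding e by (rule adjG)
    qed
    have G'0: "G' 0 = 0" unfolding G'_def by simp
    interpret carl "TYPE('a)" n G'
      by unfold_locales (rule bijG', rule G'0, rule adjG')
    obtain A j where j: "j < n" and GA: "\<And>x. G' x = A * x ^ (CHAR('a) ^ j)"
      using carlitz_main by blast
    define \<sigma> where "\<sigma> x = x ^ (CHAR('a) ^ j)" for x :: 'a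
    have \<sigma>: "\<sigma> \<in> galois_prime" unfolding \<sigma>_def using frob_gal by simp
    note gb = gal_basic[OF \<sigma>]
    have Gx: "G x = A * \<sigma> x + G 0" for x using GA[of x] unfolding G'_def \<sigma>_def by (simp add: algebra_simps)
    have A: "A \<in> nz_squares"
    proof -
      have "1 - 0 \<in> (nz_squares :: 'a set)" using one_sq by simp
      hence "G 1 - G 0 \<in> nz_squares" using adjG by blast
      thus ?thesis using Gx[of 1] gb(1) unfolding \<sigma>_def by simp
    qed
    have Gd: "G y - G x = A * \<sigma> (y - x)" for x y
    proof -
      have "G y - G x = (A * \<sigma> y + G 0) - (A * \<sigma> x + G 0)" by (simp only: Gx[of x] Gx[of y])
      thus ?thesis by (simp add: gb(3) algebra_simps)
    qed
    define \<psi> where "\<psi> x = h x - h 0" for x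
    define \<Gamma> where "\<Gamma> s = \<beta> (A * \<sigma> s) - \<alpha> s" for s
    have hstep: "h (x + s) = h x + \<Gamma> s" if s: "s \<in> nz_squares" for x s
    proof -
      have "volt_adj \<alpha> (x, 0) (x + s, \<alpha> s)" using s unfolding volt_adj_def by simp
      hence "volt_adj \<beta> (f (x, 0)) (f (x + s, \<alpha> s))" using adjf by blast
      hence e1: "h (x + s) + \<alpha> s - h x = \<beta> (G (x + s) - G x)" unfolding volt_adj_def fx by simp
      have xs: "x + s - x = s" by simp
      have e2: "G (x + s) - G x = A * \<sigma> s" using Gd[where x=x and y="x + s"] by (simp only: xs)
      have e3: "h (x + s) + \<alpha> s - h x = \<beta> (A * \<sigma> s)" using e1 by (simp only: e2)
      show ?thesis unfolding \<Gamma>_def e3[symmetric] by (simp add: algebra_simps)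
    qed
    have psi0: "\<psi> 0 = 0" unfolding \<psi>_def by simp
    have psiS: "\<psi> (x + s) = \<psi> x + \<psi> s" if "s \<in> nz_squares \<or> s = 0" for x s
      using that
    proof
      assume s: "s \<in> nz_squares"
      have "\<psi> s = \<Gamma> s" using hstep[OF s, of 0] unfolding \<psi>_def by simp
      thus ?thesis using hstep[OF s, of x] unfolding \<psi>_def by (simp add: algebra_simps)
    qed (simp add: psi0)
    have psiM: "\<psi> (x - s) = \<psi> x - \<psi> s" if "s \<in> nz_squares \<or> s = 0" for x s
      using psiS[OF that, of "x - s"] by (simp add: algebra_simps)
    have sq0: "u^2 \<in> nz_squares \<or> u^2 = 0" for u :: 'a unfolding nz_squares_def mem_Collect_eq by blast
    have dsq: "y = ((y + 1) / 2)^2 - ((y - 1) / 2)^2" for y :: 'a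
    proof -
      have a1: "(y + 1) / 2 - (y - 1) / 2 = (1::'a)"
      proof -
        have "(y + 1) / 2 - (y - 1) / 2 = ((y + 1) - (y - 1)) / (2::'a)" by (rule diff_divide_distrib[symmetric])
        also have "\<dots> = (2::'a) / 2" by (rule arg_cong[where f="\<lambda>z. z / 2"]) simp
        also have "(2::'a) / 2 = 1" using two_nz by simp
        finally show ?thesis .
      qed
      have a2: "(y + 1) / 2 + (y - 1) / 2 = y"
      proof -
        have "(y + 1) / 2 + (y - 1) / 2 = ((y + 1) + (y - 1)) / (2::'a)" by (rule add_divide_distrib[symmetric])
        also have "\<dots> = (2 * y) / (2::'a)" by (rule arg_cong[where f="\<lambda>z. z / 2"]) simp
        also have "(2 * y) / (2::'a) = y" using two_nz by simp
        finally show ?thesis .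
      qed
      have "((y + 1) / 2)^2 - ((y - 1) / 2)^2 = ((y + 1) / 2 - (y - 1) / 2) * ((y + 1) / 2 + (y - 1) / 2)"
        by (simp add: power2_eq_square algebra_simps)
      thus ?thesis using a1 a2 by simp
    qed
    have psiA: "\<psi> (x + y) = \<psi> x + \<psi> y" for x y
    proof -
      define u where "u = (y + 1) / 2"
      define v where "v = (y - 1) / 2"
      have y: "y = u^2 - v^2" unfolding u_def v_def by (rule dsq)
      have "x + y = (x + u^2) - v^2" unfolding y by (simp add: algebra_simps)
      hence "\<psi> (x + y) = \<psi> ((x + u^2) - v^2)" by (rule arg_cong)
      also have "\<dots> = \<psi> x + \<psi> (u^2) - \<psi> (v^2)" using psiM[OF sq0] psiS[OF sq0] by simp
      finally have 1: "\<psi> (x + y) = \<psi> x + \<psi> (u^2) - \<psi> (v^2)" .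
      have "y = (0 + u^2) - v^2" unfolding y by simp
      hence "\<psi> y = \<psi> ((0 + u^2) - v^2)" by (rule arg_cong)
      also have "\<dots> = \<psi> (u^2) - \<psi> (v^2)" using psiM[OF sq0] psiS[OF sq0] psi0 by simp
      finally show ?thesis using 1 by simp
    qed
    have psiN: "\<psi> (of_nat N * x) = of_nat N * \<psi> x" for N x
      by (induction N) (simp_all add: psi0 psiA algebra_simps)
    have pl: "(of_nat CHAR('a) :: 'l mod_ring) \<noteq> 0"
    proof
      assume "(of_nat CHAR('a) :: 'l mod_ring) = 0"
      hence "CARD('l) dvd CHAR('a)" by (rule of_nat_0_mod_ring_dvd)
      hence "CARD('l) = CHAR('a)" using prime_card[where 'a='l] p_prime by (simp add: primes_dvd_imp_eq)
      thus False using assms(2) by simp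
    qed
    have psiz: "\<psi> x = 0" for x
    proof -
      have "of_nat CHAR('a) * \<psi> x = \<psi> (of_nat CHAR('a) * x)" by (rule psiN[symmetric])
      also have "\<dots> = 0" using psi0 by simp
      finally show ?thesis using pl by simp
    qed
    have hc: "h x = h 0" for x using psiz[of x] unfolding \<psi>_def by simp
    have ab: "\<forall>s\<in>nz_squares. \<alpha> s = \<beta> (A * \<sigma> s)"
    proof
      fix s :: 'a assume s: "s \<in> nz_squares"
      have "h (0 + s) = h 0 + \<Gamma> s" by (rule hstep[OF s])
      hence "\<Gamma> s = 0" using hc[of s] by simp
      thus "\<alpha> s = \<beta> (A * \<sigma> s)" unfolding \<Gamma>_def by simp
    qed
    have "f = (\<lambda>(x, i). (A * \<sigma> x + G 0, i + h 0))"
    proof (rule ext, clarify)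
      fix x i show "f (x, i) = (A * \<sigma> x + G 0, i + h 0)" using fx[of x i] Gx[of x] hc[of x] by (simp add: add.commute)
    qed
    thus "\<exists>t \<sigma> a k. t \<in> nz_squares \<and> \<sigma> \<in> galois_prime \<and>
        (\<forall>s\<in>nz_squares. \<alpha> s = \<beta> (t * \<sigma> s)) \<and> f = (\<lambda>(x, i). (t * \<sigma> x + a, i + k))"
      using A \<sigma> ab by blast
  qed
qed


end
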